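(* Assume (A) and (D). For every $t>0$ there exists a constant $\kappa(t)>0$ such that for every nonnegative $h\in L^1(\mu)$ with $\|h\|_{L^1(\mu)}=1$, $$Q_th(x)\le\frac{\kappa(t)}{f_1^2(|x|)},\qquad x\in\mathbb R^d.$$ In particular, with $\alpha_t(u)=(f^2)^{-1}(\kappa(t)/u)$, for every $u\ge\kappa(t)$, $$\{x\in\mathbb R^d:\ Q_th(x)\ge u\}\subset\{x\in\mathbb R^d:\ |x|\ge\alpha_t(u)\}.$$
   Context: Setting. Fix $d\ge1$. Let $A$ be a positive semidefinite $d\times d$ matrix and $\nu$ a symmetric Lévy measure on $\mathbb R^d\setminus\{0\}$ (positive Radon measure with $\int(1\wedge|z|^2)\,\nu(dz)<\infty$, $\nu(-B)=\nu(B)$) with $\nu(\mathbb R^d\setminus\{0\})=\infty$, absolutely continuous with density also denoted $\nu(x)$. The Lévy operator $L$ on $L^2(dx)$ is the Fourier multiplier $\widehat{Lh}(\xi)=-\Psi(\xi)\widehat h(\xi)$ with $\Psi(\xi)=\tfrac12A\xi\cdot\xi+\int(1-\cos(\xi\cdot z))\,\nu(dz)$; $\{P_t\}_{t\ge0}$ is the associated convolution semigroup, $P_th(x)=\int p_t(y-x)h(y)\,dy$ with densities $p_t$. Let $V$ be locally bounded on $\mathbb R^d$ with $V(x)\to\infty$ as $|x|\to\infty$, and let $H=-L+V$ (self-adjoint, bounded below, defined via quadratic forms on $L^2(dx)$). For $t>0$, $e^{-tH}$ has a continuous, positive, symmetric kernel $u_t(x,y)$. Let $\lambda_0=\inf\sigma(H)$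 (a simple eigenvalue) and $\varphi_0$ the corresponding strictly positive, continuous, bounded eigenfunction with $\|\varphi_0\|_{L^2(dx)}=1$. Set $\mu(dx)=\varphi_0^2(x)\,dx$ (a probability measure), $q_t(x,y)=\dfrac{e^{\lambda_0t}u_t(x,y)}{\varphi_0(x)\varphi_0(y)}$ and $Q_th(x)=\int q_t(x,y)h(y)\,\mu(dy)$; $\{Q_t\}$ is a semigroup of contractions on every $L^p(\mu)$, $1\le p\le\infty$, and $q_t$ is symmetric. Assumption (A): there exist a strictly decreasing continuous $f:(0,\infty)\to(0,\infty)$, a strictly increasing continuous $g:[0,\infty)\to(0,\infty)$, constants $C_1,C_2\ge1$ and $R_0>0$ such that $C_1^{-1}f(|x|)\le\nu(x)\le C_1f(|x|)$ for $x\ne0$ and $C_2^{-1}g(|x|)\le V(x)\le C_2g(|x|)$ for $|x|\ge R_0$, and moreover: (A1) there is $C_3>0$ with $\int_{\{|x-y|>1,\,|y|>1\}}f(|x-y|)f(|y|)\,dy\le C_3f(|x|)$ for $|x|\ge1$; (A2) $(t,x)\mapsto p_t(x)$ is continuous on $(0,\infty)\times\mathbb R^d$ and for every $t_b>0$ there are $C_4,C_5>0$ with $p_t(x)\le C_4\big([e^{C_5t}f(|x|)]\wedge1\big)$ for $x\neq0$, $t\ge t_b$, and $\sup_{t\in(0,t_b]}\sup_{r\le|x|\le2}p_t(x)<\infty$ for every $r\in(0,1]$; (A3) there is $C_6\ge1$ with $g(r+1)\le C_6g(r)$ for $r\ge R_0$. Under (A), $f$ is a bijection of $(0,\infty)$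 onto $(0,\infty)$ and $f^{-1}$, $(f^2)^{-1}$ denote the inverses. We write $f_1=f\wedge1$. Condition (D): the map $r\mapsto g(r)/|\log f(r)|$ is eventually decreasing and $\lim_{r\to\infty}g(r)/|\log f(r)|=0$. Heat kernel estimate (a known consequence of (A), used as standing input): for every $T>0$ there exist $\rho>1$, $C=C(T)>0$ and constants $K,\widetilde K>0$ independent of $T$ such that for all $x,y\in\mathbb R^d$ and $t\ge T$, $C^{-1}\max\{1,e^{\lambda_0t}\Gamma(\widetilde Kt,x,y)\}\le q_t(x,y)\le C\max\{1,e^{\lambda_0t}\Gamma(Kt,x,y)\}$, where $\Gamma(\tau,x,y)=\dfrac{\mathbf 1_{\{|x|,|y|>\rho\}}}{f_1(|x|)f_1(|y|)}\displaystyle\int_{\rho-1<|z|<|x|\vee|y|}f_1(|x-z|)f_1(|z-y|)e^{-\tau g(|z|)}\,dz$. Throughout, $K$ and $\widetilde K$ denote fixed constants for which this two-sided estimate holds. *)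

theory Defs
  imports "HOL-Analysis.Analysis"
begin

text \<open>Truncation f_1 = f \<and> 1 of the radial profile f (defined on (0,\<infinity>)).
  At r = 0 we use the convention f(0) = +\<infinity>, i.e. f_1(0) = 1.\<close>
definition f1 :: "(real \<Rightarrow> real) \<Rightarrow> real \<Rightarrow> real" where
  "f1 f r = (if r > 0 then min (f r) 1 else 1)"

definition levy_density :: "('a::euclidean_space \<Rightarrow> real) \<Rightarrow> bool" where
  "levy_density nu \<longleftrightarrow>
     nu \<in> borel_measurable borel \<and> (\<forall>x. nu x \<ge> 0) \<and> (\<forall>x. nu (- x) = nu x) \<and>
     (\<integral>\<^sup>+ z. ennreal (indicator (UNIV - {0}) z * min 1 ((norm z)\<^sup>2) * nu z) \<partial>lborel) < \<infinity> \<and>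
     (\<integral>\<^sup>+ z. ennreal (indicator (UNIV - {0}) z * nu z) \<partial>lborel) = \<infinity>"

definition confining_potential :: "('a::euclidean_space \<Rightarrow> real) \<Rightarrow> bool" where
  "confining_potential V \<longleftrightarrow>
     (\<forall>K. compact K \<longrightarrow> bounded (V ` K)) \<and> filterlim V at_top at_infinity"

definition assumption_A ::
  "(real \<Rightarrow> real) \<Rightarrow> (real \<Rightarrow> real) \<Rightarrow> ('a::euclidean_space \<Rightarrow> real) \<Rightarrow> ('a \<Rightarrow> real)
    \<Rightarrow> (real \<Rightarrow> 'a \<Rightarrow> real) \<Rightarrow> bool" where
  "assumption_A f g nu V p \<longleftrightarrow>
     (\<forall>r s. 0 < r \<longrightarrow> r < s \<longrightarrow> f s < f r) \<and> continuous_on {0<..} f \<and> (\<forall>r>0. f r > 0) \<and>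
     (\<forall>r s. 0 \<le> r \<longrightarrow> r < s \<longrightarrow> g r < g s) \<and> continuous_on {0..} g \<and> (\<forall>r\<ge>0. g r > 0) \<and>
     (\<exists>C1 C2 R0. C1 \<ge> 1 \<and> C2 \<ge> 1 \<and> R0 > 0 \<and>
        (\<forall>x. x \<noteq> 0 \<longrightarrow> f (norm x) / C1 \<le> nu x \<and> nu x \<le> C1 * f (norm x)) \<and>
        (\<forall>x. norm x \<ge> R0 \<longrightarrow> g (norm x) / C2 \<le> V x \<and> V x \<le> C2 * g (norm x)) \<and>
        \<comment> \<open>(A3)\<close>
        (\<exists>C6 \<ge> 1. \<forall>r \<ge> R0. g (r + 1) \<le> C6 * g r)) \<and>
     \<comment> \<open>(A1)\<close>
     (\<exists>C3 > 0. \<forall>x::'a. norm x \<ge> 1 \<longrightarrow>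
        (\<integral>\<^sup>+ y. ennreal (indicator {y. norm (x - y) > 1 \<and> norm y > 1} y
                         * f (norm (x - y)) * f (norm y)) \<partial>lborel) \<le> ennreal (C3 * f (norm x))) \<and>
     \<comment> \<open>(A2)\<close>
     continuous_on ({0<..} \<times> UNIV) (\<lambda>(t, x). p t x) \<and>
     (\<forall>tb > 0. \<exists>C4 > 0. \<exists>C5 > 0. \<forall>t x. x \<noteq> 0 \<and> t \<ge> tb \<longrightarrow>
        p t x \<le> C4 * min (exp (C5 * t) * f (norm x)) 1) \<and>
     (\<forall>tb > 0. \<forall>r. 0 < r \<and> r \<le> 1 \<longrightarrow>
        bdd_above {p t x | t x. 0 < t \<and> t \<le> tb \<and> r \<le> norm x \<and> norm x \<le> 2})"

definition condition_D :: "(real \<Rightarrow> real) \<Rightarrow> (real \<Rightarrow> real) \<Rightarrow> bool" where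
  "condition_D f g \<longleftrightarrow>
     (\<exists>R. \<forall>r s. R \<le> r \<longrightarrow> r \<le> s \<longrightarrow> g s / \<bar>ln (f s)\<bar> \<le> g r / \<bar>ln (f r)\<bar>) \<and>
     ((\<lambda>r. g r / \<bar>ln (f r)\<bar>) \<longlongrightarrow> 0) at_top"

definition ground_state :: "('a::euclidean_space \<Rightarrow> real) \<Rightarrow> bool" where
  "ground_state phi0 \<longleftrightarrow>
     continuous_on UNIV phi0 \<and> (\<forall>x. phi0 x > 0) \<and> bounded (range phi0) \<and>
     integrable lborel (\<lambda>x. (phi0 x)\<^sup>2) \<and> (\<integral>x. (phi0 x)\<^sup>2 \<partial>lborel) = 1"

definition schroedinger_kernel :: "(real \<Rightarrow> 'a::euclidean_space \<Rightarrow> 'a \<Rightarrow> real) \<Rightarrow> bool" where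
  "schroedinger_kernel u \<longleftrightarrow>
     (\<forall>t>0. continuous_on UNIV (\<lambda>(x, y). u t x y) \<and> (\<forall>x y. u t x y > 0 \<and> u t x y = u t y x))"

definition mu :: "('a::euclidean_space \<Rightarrow> real) \<Rightarrow> 'a measure" where
  "mu phi0 = density lborel (\<lambda>x. ennreal ((phi0 x)\<^sup>2))"

definition qk :: "real \<Rightarrow> ('a \<Rightarrow> real) \<Rightarrow> (real \<Rightarrow> 'a \<Rightarrow> 'a \<Rightarrow> real) \<Rightarrow> real \<Rightarrow> 'a \<Rightarrow> 'a \<Rightarrow> real" where
  "qk lambda0 phi0 u t x y = exp (lambda0 * t) * u t x y / (phi0 x * phi0 y)"

definition Qop :: "real \<Rightarrow> ('a::euclidean_space \<Rightarrow> real) \<Rightarrow> (real \<Rightarrow> 'a \<Rightarrow> 'a \<Rightarrow> real) \<Rightarrow> real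
    \<Rightarrow> ('a \<Rightarrow> real) \<Rightarrow> 'a \<Rightarrow> real" where
  "Qop lambda0 phi0 u t h x = (\<integral>y. qk lambda0 phi0 u t x y * h y \<partial>mu phi0)"

definition Gamma :: "(real \<Rightarrow> real) \<Rightarrow> (real \<Rightarrow> real) \<Rightarrow> real \<Rightarrow> real \<Rightarrow> 'a::euclidean_space \<Rightarrow> 'a \<Rightarrow> real" where
  "Gamma f g rho tau x y =
     (if norm x > rho \<and> norm y > rho then
        (\<integral>z. indicator {z. rho - 1 < norm z \<and> norm z < max (norm x) (norm y)} z
              * (f1 f (norm (x - z)) * f1 f (norm (z - y)) * exp (- tau * g (norm z))) \<partial>lborel)
        / (f1 f (norm x) * f1 f (norm y))
      else 0)"

definition heat_kernel_estimate ::
  "(real \<Rightarrow> real) \<Rightarrow> (real \<Rightarrow> real) \<Rightarrow> real \<Rightarrow> ('a::euclidean_space \<Rightarrow> real)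
     \<Rightarrow> (real \<Rightarrow> 'a \<Rightarrow> 'a \<Rightarrow> real) \<Rightarrow> bool" where
  "heat_kernel_estimate f g lambda0 phi0 u \<longleftrightarrow>
     (\<exists>K Kt. K > 0 \<and> Kt > 0 \<and>
       (\<forall>T > 0. \<exists>rho > 1. \<exists>C > 0. \<forall>x y t. t \<ge> T \<longrightarrow>
          max 1 (exp (lambda0 * t) * Gamma f g rho (Kt * t) x y) / C \<le> qk lambda0 phi0 u t x y \<and>
          qk lambda0 phi0 u t x y \<le> C * max 1 (exp (lambda0 * t) * Gamma f g rho (K * t) x y)))"

end

theory Submission
  imports Defs
begin


lemma F_basic:
  assumes dec: "\<forall>r s. 0 < r \<longrightarrow> r < s \<longrightarrow> f s < f r" and pos: "\<forall>r>0. f r > (0::real)"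
  shows "0 < f1 f r" "f1 f r \<le> 1"
  using pos by (auto simp: f1_def)

lemma F_anti:
  assumes dec: "\<forall>r s. 0 < r \<longrightarrow> r < s \<longrightarrow> f s < f r" and pos: "\<forall>r>0. f r > (0::real)"
    and "0 \<le> a" "a \<le> b"
  shows "f1 f b \<le> f1 f a"
proof (cases "a = b")
  case True then show ?thesis by simp
next
  case False
  then have ab: "a < b" using assms by simp
  show ?thesis
  proof (cases "a > 0")
    case True
    then have "f b < f a" using dec ab by blast
    then show ?thesis using True ab unfolding f1_def by auto
  next
    case False
    then show ?thesis using assms unfolding f1_def by auto
  qed
qed

lemma F_eq: "r > 0 \<Longrightarrow> f r \<le> 1 \<Longrightarrow> f1 f r = f r" by (simp add: f1_def)
lemma F_le: "r > 0 \<Longrightarrow> f1 f r \<le> f r" by (simp add: f1_def)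

lemma F_meas:
  assumes cont: "continuous_on {0<..} f"
  shows "f1 f \<in> borel_measurable borel"
proof -
  have eq: "f1 f = (\<lambda>r. if r \<in> {0<..} then min (f r) 1 else 1)"
    by (auto simp: f1_def fun_eq_iff)
  show ?thesis unfolding eq
    by (rule borel_measurable_continuous_on_if) (auto intro!: continuous_intros cont borel_open open_greaterThan)
qed

lemma f0_meas:
  fixes f :: "real \<Rightarrow> real"
  assumes cont: "continuous_on {0<..} f"
  shows "(\<lambda>r. if r \<in> {0<..} then f r else 0) \<in> borel_measurable borel"
  by (rule borel_measurable_continuous_on_if) (auto intro!: continuous_intros cont borel_open open_greaterThan)



lemma lemQ:
  fixes f :: "real \<Rightarrow> real"
  assumes dec: "\<forall>r s. 0 < r \<longrightarrow> r < s \<longrightarrow> f s < f r" and pos: "\<forall>r>0. f r > 0"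
    and C3: "C3 > 0" and A1: "\<forall>x::'a::euclidean_space. norm x \<ge> 1 \<longrightarrow>
        (\<integral>\<^sup>+ y. ennreal (indicator {y. norm (x - y) > 1 \<and> norm y > 1} y
                         * f (norm (x - y)) * f (norm y)) \<partial>lborel) \<le> ennreal (C3 * f (norm x))"
  shows "\<exists>c0>0. \<forall>a b. a > 2 \<longrightarrow> b > 2 \<longrightarrow> f a * f b \<le> c0 * f (a + b - 1)"
proof -
  obtain e :: 'a where e: "e \<in> Basis" using nonempty_Basis by blast
  have ne: "norm e = 1" using e by simp
  define m where "m = measure lborel (ball (0::'a) (1/2))"
  have mpos: "m > 0" unfolding m_def by simp
  have mball: "emeasure lborel (ball p (1/2)) = ennreal m" for p :: 'a
  proof -
    have fin: "emeasure lborel (ball p (1/2)) \<noteq> top"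
      using emeasure_lborel_ball_finite[of p "1/2"] by auto
    show ?thesis unfolding m_def using emeasure_eq_ennreal_measure[OF fin]
      by (simp add: Ball_Volume.content_ball)
  qed
  show ?thesis
  proof (intro exI[of _ "C3 / m"] conjI allI impI)
    show "C3 / m > 0" using C3 mpos by simp
    fix a b :: real assume a: "a > 2" and b: "b > 2"
    define x where "x = (a + b - 1) *\<^sub>R e"
    define p where "p = (a - 1/2) *\<^sub>R e"
    have nx: "norm x = a + b - 1" using a b ne by (simp add: x_def)
    have nxp: "norm (x - p) = b - 1/2" using a b ne
      by (simp add: x_def p_def algebra_simps flip: scaleR_diff_left)
    have np: "norm p = a - 1/2" using a ne by (simp add: p_def)
    have fa: "f a > 0" "f b > 0" using pos a b by auto
    have pt: "ennreal (f a * f b) * indicator (ball p (1/2)) y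
        \<le> ennreal (indicator {y. norm (x - y) > 1 \<and> norm y > 1} y * f (norm (x - y)) * f (norm y))"
      for y
    proof (cases "y \<in> ball p (1/2)")
      case True
      then have d: "norm (p - y) < 1/2" by (simp add: dist_norm)
      have y1: "norm y < a" "norm y > a - 1"
        using norm_triangle_ineq[of p "y - p"] norm_triangle_ineq[of y "p - y"] d np
        by (auto simp: norm_minus_commute)
      have y2: "norm (x - y) < b" "norm (x - y) > b - 1"
        using norm_triangle_ineq[of "x - p" "p - y"] norm_triangle_ineq[of "x - y" "y - p"] d nxp
        by (auto simp: norm_minus_commute)
      have "f (norm y) \<ge> f a"
        using dec[rule_format, of "norm y" a] y1 a by linarith
      moreover have "f (norm (x - y)) \<ge> f b"
        using dec[rule_format, of "norm (x - y)" b] y2 b by linarith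
      ultimately have "f a * f b \<le> f (norm (x - y)) * f (norm y)"
        using fa mult_mono[of "f a" "f (norm y)" "f b" "f (norm (x - y))"] by (simp add: mult.commute)
      then show ?thesis using True y1 y2 a b by (simp add: indicator_def ennreal_leI)
    qed simp
    have "ennreal (f a * f b) * ennreal m = (\<integral>\<^sup>+ y. ennreal (f a * f b) * indicator (ball p (1/2)) y \<partial>lborel)"
      by (simp add: nn_integral_cmult_indicator mball)
    also have "\<dots> \<le> (\<integral>\<^sup>+ y. ennreal (indicator {y. norm (x - y) > 1 \<and> norm y > 1} y
                         * f (norm (x - y)) * f (norm y)) \<partial>lborel)"
      by (rule nn_integral_mono) (use pt in auto)
    also have "\<dots> \<le> ennreal (C3 * f (a + b - 1))" using A1[rule_format, of x] nx a b by simp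
    finally have "f a * f b * m \<le> C3 * f (a + b - 1)"
      using fa mpos C3 pos[rule_format, of "a+b-1"] a b by (simp add: ennreal_mult'[symmetric])
    then show "f a * f b \<le> C3 / m * f (a + b - 1)"
      using mpos by (simp add: field_simps)
  qed
qed



lemma lemS:
  fixes f :: "real \<Rightarrow> real"
  assumes dec: "\<forall>r s. 0 < r \<longrightarrow> r < s \<longrightarrow> f s < f r" and pos: "\<forall>r>0. f r > 0"
    and c0: "c0 > 0" and Q: "\<forall>a b. a > 2 \<longrightarrow> b > 2 \<longrightarrow> f a * f b \<le> c0 * f (a + b - 1)"
  shows "\<exists>c1\<ge>1. \<forall>t\<ge>0. f1 f t \<le> c1 * f1 f (t + 1)"
proof -
  define c1 where "c1 = 1 + c0 / f 3 + 1 / f1 f 4"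
  have f3: "f 3 > 0" using pos by simp
  have F4: "f1 f 4 > 0" "f1 f 4 \<le> 1" using F_basic[OF dec pos] by auto
  have c1ge: "c1 \<ge> 1" "c1 \<ge> c0 / f 3" "c1 \<ge> 1 / f1 f 4"
    using f3 F4 c0 by (auto simp: c1_def)
  have main: "f1 f t \<le> c1 * f1 f (t + 2)" if t: "t \<ge> 0" for t
  proof (cases "t \<le> 2")
    case True
    have "f1 f 4 \<le> f1 f (t + 2)" using F_anti[OF dec pos, of "t+2" 4] t True by simp
    then have "1 \<le> (1 / f1 f 4) * f1 f (t + 2)" using F4 by (simp add: field_simps)
    also have "\<dots> \<le> c1 * f1 f (t + 2)"
      using c1ge F_basic[OF dec pos, of "t+2"] by (intro mult_right_mono) auto
    finally show ?thesis using F_basic[OF dec pos, of t] by linarith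
  next
    case False
    then have q: "f t * f 3 \<le> c0 * f (t + 2)" using Q[rule_format, of t 3] by (simp add: add.commute)
    show ?thesis
    proof (cases "f (t + 2) \<le> 1")
      case True
      have "f1 f t \<le> f t" using False by (simp add: F_le)
      also have "\<dots> \<le> (c0 / f 3) * f (t + 2)" using q f3 by (simp add: field_simps)
      also have "\<dots> \<le> c1 * f (t + 2)"
        using c1ge pos[rule_format, of "t+2"] False by (intro mult_right_mono) auto
      finally show ?thesis using True False by (simp add: F_eq)
    next
      case False
      then have "f1 f (t + 2) = 1" using \<open>\<not> t \<le> 2\<close> by (simp add: f1_def)
      then show ?thesis using c1ge F_basic[OF dec pos, of t] by simp
    qed
  qed
  show ?thesis
  proof (intro exI[of _ c1] conjI allI impI)
    show "c1 \<ge> 1" by (rule c1ge)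
    fix t :: real assume t: "t \<ge> 0"
    have "f1 f (t + 2) \<le> f1 f (t + 1)" using F_anti[OF dec pos, of "t+1" "t+2"] t by simp
    then show "f1 f t \<le> c1 * f1 f (t + 1)"
      using main[OF t] c1ge by (smt (verit) mult_left_mono)
  qed
qed

lemma lemS2:
  fixes f :: "real \<Rightarrow> real"
  assumes dec: "\<forall>r s. 0 < r \<longrightarrow> r < s \<longrightarrow> f s < f r" and pos: "\<forall>r>0. f r > 0"
    and c1: "c1 \<ge> 1" and S: "\<forall>t\<ge>0. f1 f t \<le> c1 * f1 f (t + 1)"
    and "0 \<le> w" "D \<le> w + 1" "0 \<le> D"
  shows "f1 f w \<le> c1 * f1 f D"
proof -
  have "f1 f (w + 1) \<le> f1 f D" using F_anti[OF dec pos, of D "w+1"] assms by simp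
  then show ?thesis using S[rule_format, of w] assms c1 by (smt (verit) mult_left_mono)
qed

lemma lemP:
  fixes f :: "real \<Rightarrow> real"
  assumes dec: "\<forall>r s. 0 < r \<longrightarrow> r < s \<longrightarrow> f s < f r" and pos: "\<forall>r>0. f r > 0"
    and c0: "c0 > 0" and Q: "\<forall>a b. a > 2 \<longrightarrow> b > 2 \<longrightarrow> f a * f b \<le> c0 * f (a + b - 1)"
    and c1: "c1 \<ge> 1" and S: "\<forall>t\<ge>0. f1 f t \<le> c1 * f1 f (t + 1)"
  shows "\<exists>c>0. \<forall>a b. 0 \<le> a \<longrightarrow> 0 \<le> b \<longrightarrow> f1 f a * f1 f b \<le> c * f1 f (a + b)"
proof -
  have Fb: "\<And>r. 0 < f1 f r" "\<And>r. f1 f r \<le> 1" using F_basic[OF dec pos] by auto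
  have S4: "f1 f t \<le> (c1 * c1 * c1 * c1) * f1 f (t + 4)" if "t \<ge> 0" for t
  proof -
    have "f1 f t \<le> c1 * f1 f (t + 1)" using S that by simp
    also have "\<dots> \<le> c1 * (c1 * f1 f (t + 1 + 1))" using S[rule_format, of "t+1"] that c1 by simp
    also have "\<dots> \<le> c1 * (c1 * (c1 * f1 f (t + 1 + 1 + 1)))"
      using S[rule_format, of "t+1+1"] that c1 by simp
    also have "\<dots> \<le> c1 * (c1 * (c1 * (c1 * f1 f (t + 1 + 1 + 1 + 1))))"
      using S[rule_format, of "t+1+1+1"] that c1 by simp
    finally show ?thesis by (simp add: mult.assoc add.assoc)
  qed
  define c where "c = c1 * c1 * c1 * c1 + c0 * c1 + c1"
  have cge: "c \<ge> c1 * c1 * c1 * c1" "c \<ge> c0 * c1" "c \<ge> c1" "c > 0"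
  proof -
    have p4: "c1 * c1 * c1 * c1 \<ge> 1" using c1 one_le_mult_iff by (metis (no_types) less_le_trans mult_le_cancel_left1 not_one_le_zero order_le_less) 
    have p2: "c0 * c1 \<ge> 0" using c0 c1 by simp
    show "c \<ge> c1 * c1 * c1 * c1" "c \<ge> c0 * c1" "c \<ge> c1" "c > 0"
      using p4 p2 c1 by (auto simp: c_def)
  qed
  have small: "f1 f a * f1 f b \<le> c * f1 f (a + b)" if "0 \<le> a" "a \<le> 3" "0 \<le> b" for a b
  proof -
    have "f1 f a * f1 f b \<le> f1 f b" using Fb[of a] Fb[of b] by (simp add: mult_left_le_one_le)
    also have "\<dots> \<le> (c1 * c1 * c1 * c1) * f1 f (b + 4)" using S4 that by simp
    also have "\<dots> \<le> (c1 * c1 * c1 * c1) * f1 f (a + b)"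
      using F_anti[OF dec pos, of "a+b" "b+4"] that c1 by (intro mult_left_mono) auto
    also have "\<dots> \<le> c * f1 f (a + b)" using cge Fb[of "a+b"] by (intro mult_right_mono) auto
    finally show ?thesis .
  qed
  show ?thesis
  proof (intro exI[of _ c] conjI allI impI)
    show "c > 0" by (rule cge)
    fix a b :: real assume a: "0 \<le> a" and b: "0 \<le> b"
    show "f1 f a * f1 f b \<le> c * f1 f (a + b)"
    proof (cases "a \<le> 3 \<or> b \<le> 3")
      case True
      then show ?thesis using small[of a b] small[of b a] a b by (auto simp: mult.commute add.commute)
    next
      case False
      then have ab: "a > 3" "b > 3" by auto
      have "f1 f a * f1 f b \<le> f a * f b"
        using ab F_le[of a f] F_le[of b f] Fb[of a] Fb[of b] by (intro mult_mono) auto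
      also have "\<dots> \<le> c0 * f (a + b - 1)" using Q ab by simp
      finally have ineq: "f1 f a * f1 f b \<le> c0 * f (a + b - 1)" .
      have Sab: "f1 f (a + b - 1) \<le> c1 * f1 f (a + b)" using S[rule_format, of "a+b-1"] ab by simp
      show ?thesis
      proof (cases "f (a + b - 1) \<le> 1")
        case True
        then have "f1 f a * f1 f b \<le> c0 * f1 f (a + b - 1)" using ineq ab by (simp add: F_eq)
        also have "\<dots> \<le> c0 * (c1 * f1 f (a + b))" using Sab c0 by simp
        also have "\<dots> \<le> c * f1 f (a + b)" using cge Fb[of "a+b"]
          by (simp add: mult.assoc[symmetric] mult_right_mono)
        finally show ?thesis .
      next
        case False
        then have "f1 f (a + b - 1) = 1" using ab by (simp add: f1_def)
        then have "1 \<le> c1 * f1 f (a + b)" using Sab by simp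
        also have "\<dots> \<le> c * f1 f (a + b)" using cge Fb[of "a+b"] by (intro mult_right_mono) auto
        finally show ?thesis using Fb[of a] Fb[of b]
          by (smt (verit) mult_le_one)
      qed
    qed
  qed
qed



lemma nn_translate:
  fixes g :: "'a::euclidean_space \<Rightarrow> ennreal"
  assumes g: "g \<in> borel_measurable borel"
  shows "(\<integral>\<^sup>+ z. g (z - y) \<partial>lborel) = (\<integral>\<^sup>+ w. g w \<partial>lborel)"
proof -
  have "(\<integral>\<^sup>+ w. g w \<partial>lborel) = (\<integral>\<^sup>+ w. g w \<partial>(distr lborel borel ((+) (- y))))"
    by (simp add: lborel_distr_plus)
  also have "\<dots> = (\<integral>\<^sup>+ z. g (- y + z) \<partial>lborel)"
    by (rule nn_integral_distr) (use g in auto)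
  finally show ?thesis by (simp add: algebra_simps)
qed

lemma cball_measure:
  "emeasure lborel (cball (p::'a::euclidean_space) 1) = ennreal (measure lborel (cball (0::'a) 1))"
proof -
  have fin: "emeasure lborel (cball p 1) \<noteq> top"
    using emeasure_lborel_cball_finite[of p 1] by auto
  show ?thesis using emeasure_eq_ennreal_measure[OF fin]
    by (simp add: Ball_Volume.content_cball)
qed

lemma levy_J:
  fixes f :: "real \<Rightarrow> real" and nu :: "'a::euclidean_space \<Rightarrow> real"
  assumes lev: "levy_density nu" and C1: "C1 \<ge> 1"
    and nub: "\<forall>x. x \<noteq> 0 \<longrightarrow> f (norm x) / C1 \<le> nu x \<and> nu x \<le> C1 * f (norm x)"
  shows "(\<integral>\<^sup>+ w. ennreal (indicator {w. norm w > 1} w * f (norm (w::'a))) \<partial>lborel) < \<infinity>"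
proof -
  let ?L = "\<lambda>z. ennreal (indicator (UNIV - {0}) z * min 1 ((norm z)\<^sup>2) * nu z)"
  have nm[measurable]: "nu \<in> borel_measurable borel" using lev unfolding levy_density_def by auto
  have Lm: "?L \<in> borel_measurable lborel" by measurable
  have Lfin: "(\<integral>\<^sup>+ z. ?L z \<partial>lborel) < \<infinity>" using lev unfolding levy_density_def by auto
  have pt: "ennreal (indicator {w. norm w > 1} w * f (norm w)) \<le> ennreal C1 * ?L w" for w
  proof (cases "norm w > 1")
    case True
    then have w0: "w \<noteq> 0" by auto
    have "1 < (norm w)\<^sup>2" using True by (simp add: one_less_power)
    then have m: "min 1 ((norm w)\<^sup>2) = 1" by simp
    have "f (norm w) \<le> C1 * nu w" using nub[rule_format, OF w0] C1 by (simp add: field_simps)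
    then have "ennreal (f (norm w)) \<le> ennreal (C1 * nu w)" by (rule ennreal_leI)
    moreover have "nu w \<ge> 0" using lev unfolding levy_density_def by auto
    ultimately show ?thesis using True w0 m C1 by (simp add: ennreal_mult)
  qed simp
  have "(\<integral>\<^sup>+ w. ennreal (indicator {w. norm w > 1} w * f (norm (w::'a))) \<partial>lborel)
        \<le> (\<integral>\<^sup>+ w. ennreal C1 * ?L w \<partial>lborel)"
    using pt by (simp add: nn_integral_mono)
  also have "\<dots> = ennreal C1 * (\<integral>\<^sup>+ w. ?L w \<partial>lborel)" by (rule nn_integral_cmult[OF Lm])
  also have "\<dots> < \<infinity>" using Lfin by (simp add: ennreal_mult_less_top)
  finally show ?thesis .
qed

lemma levy_ex1:
  fixes f :: "real \<Rightarrow> real" and nu :: "'a::euclidean_space \<Rightarrow> real"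
  assumes lev: "levy_density nu" and C1: "C1 \<ge> 1"
    and nub: "\<forall>x. x \<noteq> 0 \<longrightarrow> f (norm x) / C1 \<le> nu x \<and> nu x \<le> C1 * f (norm x)"
  shows "\<exists>r>0. f r \<ge> 1"
proof (rule ccontr)
  assume "\<not> (\<exists>r>0. f r \<ge> 1)"
  then have flt: "\<forall>r>0. f r < 1" by auto
  let ?L = "\<lambda>z. ennreal (indicator (UNIV - {0}) z * min 1 ((norm z)\<^sup>2) * nu z)"
  have nm[measurable]: "nu \<in> borel_measurable borel" using lev unfolding levy_density_def by auto
  have Lm: "?L \<in> borel_measurable lborel" by measurable
  have Lfin: "(\<integral>\<^sup>+ z. ?L z \<partial>lborel) < \<infinity>" using lev unfolding levy_density_def by auto
  have inf: "(\<integral>\<^sup>+ z. ennreal (indicator (UNIV - {0}) z * nu z) \<partial>lborel) = \<infinity>"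
    using lev unfolding levy_density_def by auto
  have pt: "ennreal (indicator (UNIV - {0}) z * nu z) \<le> ennreal C1 * indicator (ball 0 1) z + ?L z" for z
  proof (cases "z = 0")
    case False
    show ?thesis
    proof (cases "norm z < 1")
      case True
      have "nu z \<le> C1 * f (norm z)" using nub False by auto
      also have "\<dots> \<le> C1" using flt[rule_format, of "norm z"] False C1 by (simp add: mult_left_le)
      finally have "ennreal (nu z) \<le> ennreal C1" by (rule ennreal_leI)
      then show ?thesis using True False by (simp add: indicator_def add_increasing2)
    next
      case False2: False
      have "1 \<le> (norm z)\<^sup>2" using False2 by (simp add: one_le_power)
      then have m: "min 1 ((norm z)\<^sup>2) = 1" by simp
      show ?thesis using False False2 m by (simp add: indicator_def)
    qed
  qed simp
  have "(\<integral>\<^sup>+ z. ennreal (indicator (UNIV - {0}) z * nu (z::'a)) \<partial>lborel)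
      \<le> (\<integral>\<^sup>+ z. ennreal C1 * indicator (ball 0 1) z + ?L z \<partial>lborel)"
    using pt by (simp add: nn_integral_mono)
  also have "\<dots> = (\<integral>\<^sup>+ z. ennreal C1 * indicator (ball (0::'a) 1) z \<partial>lborel) + (\<integral>\<^sup>+ z. ?L z \<partial>lborel)"
  proof (rule nn_integral_add[OF _ Lm])
    show "(\<lambda>z. ennreal C1 * indicator (ball (0::'a) 1) z) \<in> borel_measurable lborel"
      by (intro borel_measurable_times_ennreal borel_measurable_const borel_measurable_indicator) auto
  qed
  also have "\<dots> = ennreal C1 * emeasure lborel (ball (0::'a) 1) + (\<integral>\<^sup>+ z. ?L z \<partial>lborel)"
    by (simp add: nn_integral_cmult_indicator)
  also have "\<dots> < \<infinity>" using Lfin emeasure_lborel_ball_finite[of "0::'a" 1]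
    by (simp add: ennreal_mult_less_top)
  finally show False using inf by simp
qed



lemma conv:
  fixes f :: "real \<Rightarrow> real"
  assumes dec: "\<forall>r s. 0 < r \<longrightarrow> r < s \<longrightarrow> f s < f r" and pos: "\<forall>r>0. f r > 0"
    and cont: "continuous_on {0<..} f"
    and C3: "C3 > 0" and A1: "\<forall>x::'a::euclidean_space. norm x \<ge> 1 \<longrightarrow>
        (\<integral>\<^sup>+ y. ennreal (indicator {y. norm (x - y) > 1 \<and> norm y > 1} y
                         * f (norm (x - y)) * f (norm y)) \<partial>lborel) \<le> ennreal (C3 * f (norm x))"
    and Jfin: "(\<integral>\<^sup>+ w. ennreal (indicator {w. norm w > 1} w * f (norm (w::'a))) \<partial>lborel) < \<infinity>"
    and c1: "c1 \<ge> 1" and S: "\<forall>t\<ge>0. f1 f t \<le> c1 * f1 f (t + 1)"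
  shows "\<exists>M>0. \<forall>x y::'a. (\<integral>\<^sup>+ z. ennreal (f1 f (norm (x - z)) * f1 f (norm (z - y))) \<partial>lborel)
            \<le> ennreal (M * f1 f (norm (x - y)))"
proof -
  define F where "F = f1 f"
  have Fb: "\<And>r. 0 < F r" "\<And>r. F r \<le> 1" using F_basic[OF dec pos] by (auto simp: F_def)
  have Fm[measurable]: "F \<in> borel_measurable borel" using F_meas[OF cont] by (simp add: F_def)
  define f0 where "f0 = (\<lambda>r. if r \<in> {0<..} then f r else 0)"
  have f0m[measurable]: "f0 \<in> borel_measurable borel" using f0_meas[OF cont] by (simp add: f0_def)
  define J where "J = (\<integral>\<^sup>+ w. ennreal (indicator {w. norm w > 1} w * f (norm (w::'a))) \<partial>lborel)"
  define j where "j = enn2real J"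
  have Jj: "J = ennreal j" "j \<ge> 0" using Jfin by (auto simp: J_def j_def less_top)
  define v1 where "v1 = measure lborel (cball (0::'a) 1)"
  have v1: "v1 \<ge> 0" by (simp add: v1_def)
  have F1: "F 1 > 0" by (rule Fb)
  have f1p: "f 1 > 0" using pos by simp
  define B3 where "B3 = C3 * (1 + f 1) + j / F 1"
  have B3: "B3 \<ge> 0" using C3 f1p Jj F1 by (simp add: B3_def)
  define M where "M = 2 * c1 * v1 + B3 + 1"
  have "0 \<le> 2 * c1 * v1" using c1 v1 by simp
  then have Mpos: "M > 0" using B3 unfolding M_def by linarith
  show ?thesis unfolding F_def[symmetric]
  proof (intro exI[of _ M] conjI allI)
    show "M > 0" by (rule Mpos)
    fix x y :: 'a
    define D where "D = norm (x - y)"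
    have D0: "D \<ge> 0" by (simp add: D_def)
    have FD: "F D > 0" by (rule Fb)
    define R3 where "R3 = {z. 1 < norm (x - z) \<and> 1 < norm (z - y)}"
    define g3 where "g3 = (\<lambda>z. ennreal (indicator R3 z * F (norm (x - z)) * F (norm (z - y))))"
    have R3m[measurable]: "R3 \<in> sets borel" unfolding R3_def by measurable
    have g3m: "g3 \<in> borel_measurable lborel" unfolding g3_def by measurable
    have Sw: "F w \<le> c1 * F D" if "0 \<le> w" "D \<le> w + 1" for w
      using lemS2[OF dec pos c1 S that(1) that(2) D0] by (simp add: F_def)
    have pt: "ennreal (F (norm (x - z)) * F (norm (z - y)))
       \<le> ennreal (c1 * F D) * indicator (cball x 1) z
         + (ennreal (c1 * F D) * indicator (cball y 1) z + g3 z)" for z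
    proof -
      have tri: "D \<le> norm (x - z) + norm (z - y)" unfolding D_def
        using norm_triangle_ineq[of "x - z" "z - y"] by simp
      show ?thesis
      proof (cases "norm (x - z) \<le> 1")
        case True
        have "F (norm (x - z)) * F (norm (z - y)) \<le> F (norm (z - y))"
          using Fb by (simp add: mult_left_le_one_le less_imp_le)
        also have "\<dots> \<le> c1 * F D" using Sw[of "norm (z - y)"] tri True by simp
        finally have "ennreal (F (norm (x - z)) * F (norm (z - y))) \<le> ennreal (c1 * F D) * indicator (cball x 1) z"
          using True by (simp add: dist_norm ennreal_leI)
        then show ?thesis by (simp add: add_increasing2)
      next
        case False
        show ?thesis
        proof (cases "norm (z - y) \<le> 1")
          case True
          have "F (norm (x - z)) * F (norm (z - y)) \<le> F (norm (x - z))"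
            using Fb by (simp add: mult_right_le_one_le less_imp_le)
          also have "\<dots> \<le> c1 * F D" using Sw[of "norm (x - z)"] tri True by simp
          finally have "ennreal (F (norm (x - z)) * F (norm (z - y))) \<le> ennreal (c1 * F D) * indicator (cball y 1) z"
            using True by (simp add: dist_norm norm_minus_commute ennreal_leI)
          then show ?thesis by (simp add: add_increasing add_increasing2)
        next
          case False2: False
          then have "z \<in> R3" using False by (simp add: R3_def)
          then have "ennreal (F (norm (x - z)) * F (norm (z - y))) = g3 z" by (simp add: g3_def)
          then show ?thesis by (simp add: add_increasing)
        qed
      qed
    qed
    have i3: "(\<integral>\<^sup>+ z. g3 z \<partial>lborel) \<le> ennreal (B3 * F D)"
    proof (cases "D \<ge> 1")
      case True
      define X where "X = x - y"
      have nX: "norm X = D" by (simp add: X_def D_def)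
      define G where "G = (\<lambda>w. ennreal (indicator {w. norm (X - w) > 1 \<and> norm w > 1} w
                         * f (norm (X - w)) * f (norm w)))"
      have Geq: "G = (\<lambda>w. ennreal (indicator {w. norm (X - w) > 1 \<and> norm w > 1} w
                         * f0 (norm (X - w)) * f0 (norm w)))"
        by (auto simp: G_def f0_def fun_eq_iff indicator_def)
      have Gm: "G \<in> borel_measurable borel" unfolding Geq by measurable
      have ptG: "g3 z \<le> G (z - y)" for z
      proof (cases "z \<in> R3")
        case True
        then have a: "norm (x - z) > 1" "norm (z - y) > 1" by (auto simp: R3_def)
        have "F (norm (x - z)) * F (norm (z - y)) \<le> f (norm (x - z)) * f (norm (z - y))"
        proof -
          have e1: "F (norm (x - z)) \<le> f (norm (x - z))" using a F_le[of "norm (x - z)" f] unfolding F_def by force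
          have e2: "F (norm (z - y)) \<le> f (norm (z - y))" using a F_le[of "norm (z - y)" f] unfolding F_def by force
          have e3: "0 \<le> f (norm (x - z))" using a pos[rule_format, of "norm (x - z)"] by linarith
          show ?thesis using mult_mono[OF e1 e2 e3] Fb by (simp add: less_imp_le)
        qed
        moreover have e: "X - (z - y) = x - z" by (simp add: X_def)
        have "G (z - y) = ennreal (f (norm (x - z)) * f (norm (z - y)))"
          using a by (simp add: G_def e indicator_def)
        ultimately show ?thesis using True a by (simp add: g3_def ennreal_leI)
      qed (simp add: g3_def)
      have "(\<integral>\<^sup>+ z. g3 z \<partial>lborel) \<le> (\<integral>\<^sup>+ z. G (z - y) \<partial>lborel)"
        by (rule nn_integral_mono) (rule ptG)
      also have "\<dots> = (\<integral>\<^sup>+ w. G w \<partial>lborel)" by (rule nn_translate[OF Gm])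
      also have "\<dots> \<le> ennreal (C3 * f D)" using A1[rule_format, of X] nX True by (simp add: G_def)
      also have "\<dots> \<le> ennreal (B3 * F D)"
      proof (rule ennreal_leI)
        have "f D \<le> (1 + f 1) * F D"
        proof (cases "f D \<le> 1")
          case True
          then have "F D = f D" using \<open>D \<ge> 1\<close> by (simp add: F_def F_eq)
          moreover have "0 \<le> f D * f 1" using f1p pos[rule_format, of D] \<open>D \<ge> 1\<close> by simp
          ultimately show ?thesis by (simp add: algebra_simps)
        next
          case False
          then have "F D = 1" using \<open>D \<ge> 1\<close> by (simp add: F_def f1_def)
          moreover have "f D \<le> f 1" using dec[rule_format, of 1 D] \<open>D \<ge> 1\<close>
            by (cases "D = 1") auto
          ultimately show ?thesis by simp
        qed
        then have "C3 * f D \<le> C3 * ((1 + f 1) * F D)" using C3 by simp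
        also have "\<dots> \<le> B3 * F D" using Jj F1 FD by (simp add: B3_def algebra_simps)
        finally show "C3 * f D \<le> B3 * F D" .
      qed
      finally show ?thesis .
    next
      case False
      define H where "H = (\<lambda>w. ennreal (indicator {w. norm w > 1} w * f (norm (w::'a))))"
      have Heq: "H = (\<lambda>w. ennreal (indicator {w. norm w > 1} w * f0 (norm w)))"
        by (auto simp: H_def f0_def fun_eq_iff indicator_def)
      have Hm: "H \<in> borel_measurable borel" unfolding Heq by measurable
      have ptH: "g3 z \<le> H (z - y)" for z
      proof (cases "z \<in> R3")
        case True
        then have a: "norm (x - z) > 1" "norm (z - y) > 1" by (auto simp: R3_def)
        have "F (norm (x - z)) * F (norm (z - y)) \<le> F (norm (z - y))"
          using Fb by (simp add: mult_left_le_one_le less_imp_le)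
        also have "\<dots> \<le> f (norm (z - y))" using a F_le[of "norm (z - y)" f] unfolding F_def by force
        finally show ?thesis using True a by (simp add: g3_def H_def ennreal_leI)
      qed (simp add: g3_def)
      have "(\<integral>\<^sup>+ z. g3 z \<partial>lborel) \<le> (\<integral>\<^sup>+ z. H (z - y) \<partial>lborel)"
        by (rule nn_integral_mono) (rule ptH)
      also have "\<dots> = (\<integral>\<^sup>+ w. H w \<partial>lborel)" by (rule nn_translate[OF Hm])
      also have "\<dots> = ennreal j" using Jj by (simp add: H_def J_def)
      also have "\<dots> \<le> ennreal (B3 * F D)"
      proof (rule ennreal_leI)
        have "F 1 \<le> F D" using F_anti[OF dec pos, of D 1] False D0 by (simp add: F_def)
        then have "j \<le> j / F 1 * F D" using Jj F1 by (simp add: field_simps mult_left_mono)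
        also have "\<dots> \<le> B3 * F D" using C3 f1p FD
          by (intro mult_right_mono) (auto simp: B3_def)
        finally show "j \<le> B3 * F D" .
      qed
      finally show ?thesis .
    qed
    have "(\<integral>\<^sup>+ z. ennreal (F (norm (x - z)) * F (norm (z - y))) \<partial>lborel)
       \<le> (\<integral>\<^sup>+ z. ennreal (c1 * F D) * indicator (cball x 1) z
         + (ennreal (c1 * F D) * indicator (cball y 1) z + g3 z) \<partial>lborel)"
      by (rule nn_integral_mono) (rule pt)
    also have "\<dots> = ennreal (c1 * F D) * emeasure lborel (cball x 1)
         + (ennreal (c1 * F D) * emeasure lborel (cball y 1) + (\<integral>\<^sup>+ z. g3 z \<partial>lborel))"
    proof -
      have m1: "(\<lambda>z. ennreal (c1 * F D) * indicator (cball x 1) z) \<in> borel_measurable lborel"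
        by (intro borel_measurable_times_ennreal borel_measurable_const borel_measurable_indicator) auto
      have m2: "(\<lambda>z. ennreal (c1 * F D) * indicator (cball y 1) z) \<in> borel_measurable lborel"
        by (intro borel_measurable_times_ennreal borel_measurable_const borel_measurable_indicator) auto
      have m3: "(\<lambda>z. ennreal (c1 * F D) * indicator (cball y 1) z + g3 z) \<in> borel_measurable lborel"
        using m2 g3m by (rule borel_measurable_add)
      show ?thesis
        apply (subst nn_integral_add[OF m1 m3])
        apply (subst nn_integral_add[OF m2 g3m])
        apply (simp add: nn_integral_cmult_indicator)
        done
    qed
    also have "\<dots> \<le> ennreal (c1 * F D * v1) + (ennreal (c1 * F D * v1) + ennreal (B3 * F D))"
      using i3 c1 FD v1 by (simp add: cball_measure v1_def add_left_mono ennreal_mult' add_mono)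
    also have "\<dots> = ennreal (c1 * F D * v1 + (c1 * F D * v1 + B3 * F D))"
    proof -
      have n1: "0 \<le> c1 * F D * v1" using c1 FD v1 by simp
      have n3: "0 \<le> B3 * F D" using B3 FD by simp
      show ?thesis
        by (simp only: ennreal_plus[OF n1 n3] ennreal_plus[OF n1 add_nonneg_nonneg[OF n1 n3]])
    qed
    also have "\<dots> \<le> ennreal (M * F D)"
      using FD by (intro ennreal_leI) (simp add: M_def algebra_simps)
    finally show "(\<integral>\<^sup>+ z. ennreal (F (norm (x - z)) * F (norm (z - y))) \<partial>lborel) \<le> ennreal (M * F (norm (x - y)))"
      by (simp add: D_def)
  qed
qed



lemma gamma_bound:
  fixes f g :: "real \<Rightarrow> real" and x y :: "'a::euclidean_space"
  assumes dec: "\<forall>r s. 0 < r \<longrightarrow> r < s \<longrightarrow> f s < f r" and pos: "\<forall>r>0. f r > 0"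
    and gpos: "\<forall>r\<ge>0. g r > 0" and tau: "tau > 0"
    and M: "M > 0" and Conv: "\<forall>x y::'a. (\<integral>\<^sup>+ z. ennreal (f1 f (norm (x - z)) * f1 f (norm (z - y))) \<partial>lborel)
            \<le> ennreal (M * f1 f (norm (x - y)))"
    and c: "c > 0" and P: "\<forall>a b. 0 \<le> a \<longrightarrow> 0 \<le> b \<longrightarrow> f1 f a * f1 f b \<le> c * f1 f (a + b)"
  shows "Gamma f g rho tau x y \<le> M * (1 + c) / (f1 f (norm x))\<^sup>2"
proof -
  define F where "F = f1 f"
  have Fb: "\<And>r. 0 < F r" "\<And>r. F r \<le> 1" using F_basic[OF dec pos] by (auto simp: F_def)
  define B where "B = M * (1 + c)"
  have Bp: "B > 0" using M c by (simp add: B_def)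
  have rhs: "0 < B / (F (norm x))\<^sup>2" using Bp Fb(1)[of "norm x"] by (intro divide_pos_pos) auto
  have goal: "Gamma f g rho tau x y \<le> B / (F (norm x))\<^sup>2"
  proof (cases "norm x > rho \<and> norm y > rho")
    case False
    then have "Gamma f g rho tau x y = 0" unfolding Gamma_def by auto
    then show ?thesis using rhs by simp
  next
    case True
    define phi where "phi = (\<lambda>z. indicator {z. rho - 1 < norm z \<and> norm z < max (norm x) (norm y)} z
              * (F (norm (x - z)) * F (norm (z - y)) * exp (- tau * g (norm z))))"
    define I where "I = (\<integral>z. phi z \<partial>lborel)"
    define D where "D = norm (x - y)"
    have G: "Gamma f g rho tau x y = I / (F (norm x) * F (norm y))"
      using True by (simp add: Gamma_def I_def phi_def F_def)
    have phi0: "0 \<le> phi z" for z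
      using Fb(1)[of "norm (x - z)"] Fb(1)[of "norm (z - y)"] unfolding phi_def
      by (intro mult_nonneg_nonneg) (auto simp: less_imp_le)
    have phile: "phi z \<le> F (norm (x - z)) * F (norm (z - y))" for z
    proof -
      have "0 \<le> tau * g (norm z)" using gpos[rule_format, of "norm z"] tau by simp
      then have "exp (- tau * g (norm z)) \<le> 1" by simp
      then have "F (norm (x - z)) * F (norm (z - y)) * exp (- tau * g (norm z)) \<le> F (norm (x - z)) * F (norm (z - y))"
        using Fb by (simp add: mult_left_le less_imp_le)
      then show ?thesis using Fb by (simp add: phi_def indicator_def less_imp_le)
    qed
    have I0: "0 \<le> I" unfolding I_def using phi0 by (simp add: integral_nonneg_AE)
    have FD: "0 < F D" by (rule Fb)
    have IM: "I \<le> M * F D"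
    proof (cases "integrable lborel phi")
      case True
      have "ennreal I = (\<integral>\<^sup>+ z. ennreal (phi z) \<partial>lborel)"
        unfolding I_def using True phi0 by (simp add: nn_integral_eq_integral)
      also have "\<dots> \<le> (\<integral>\<^sup>+ z. ennreal (F (norm (x - z)) * F (norm (z - y))) \<partial>lborel)"
        using phile by (intro nn_integral_mono ennreal_leI) auto
      also have "\<dots> \<le> ennreal (M * F D)" using Conv by (simp add: F_def D_def)
      finally show ?thesis using M FD by simp
    next
      case False
      then show ?thesis using M FD by (simp add: I_def not_integrable_integral_eq)
    qed
    have Fx: "0 < F (norm x)" and Fy: "0 < F (norm y)" by (rule Fb)+
    show ?thesis
    proof (cases "norm y \<le> norm x")
      case True
      have FxFy: "F (norm x) \<le> F (norm y)" using F_anti[OF dec pos, of "norm y" "norm x"] True by (simp add: F_def)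
      have "I \<le> M" using IM FD Fb[of D] M by (smt (verit) mult_left_le)
      have "I / (F (norm x) * F (norm y)) \<le> M / (F (norm x) * F (norm y))"
        using \<open>I \<le> M\<close> Fx Fy by (simp add: divide_right_mono)
      also have "\<dots> \<le> M / (F (norm x) * F (norm x))"
        using FxFy Fx Fy M by (intro divide_left_mono mult_left_mono) auto
      also have "\<dots> \<le> B / (F (norm x))\<^sup>2"
        using M c Fx by (simp add: B_def power2_eq_square divide_right_mono)
      finally show ?thesis using G by simp
    next
      case False
      have tri: "norm y \<le> norm x + D" unfolding D_def using norm_triangle_ineq3[of y x]
        by (metis add.commute norm_minus_commute norm_triangle_ineq2 diff_le_eq)
      have "F (norm x) * F D \<le> c * F (norm x + D)" using P[rule_format, of "norm x" D] by (simp add: D_def F_def)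
      also have "\<dots> \<le> c * F (norm y)"
        using F_anti[OF dec pos, of "norm y" "norm x + D"] tri c by (simp add: F_def)
      finally have PP: "F (norm x) * F D \<le> c * F (norm y)" .
      have "I / (F (norm x) * F (norm y)) \<le> M * F D / (F (norm x) * F (norm y))"
        using IM Fx Fy by (simp add: divide_right_mono)
      also have "\<dots> = M * (F (norm x) * F D) / ((F (norm x))\<^sup>2 * F (norm y))"
        using Fx by (simp add: power2_eq_square field_simps)
      also have "\<dots> \<le> M * (c * F (norm y)) / ((F (norm x))\<^sup>2 * F (norm y))"
        using PP M Fx Fy by (intro divide_right_mono mult_left_mono) auto
      also have "\<dots> = M * c / (F (norm x))\<^sup>2" using Fy by (simp add: field_simps)
      also have "\<dots> \<le> B / (F (norm x))\<^sup>2" using M c Fx by (simp add: B_def divide_right_mono algebra_simps)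
      finally show ?thesis using G by simp
    qed
  qed
  then show ?thesis by (simp add: F_def B_def)
qed



theorem lemma3p1:
  fixes f g :: "real \<Rightarrow> real"
    and nu V phi0 :: "'a::euclidean_space \<Rightarrow> real"
    and p :: "real \<Rightarrow> 'a \<Rightarrow> real"
    and u :: "real \<Rightarrow> 'a \<Rightarrow> 'a \<Rightarrow> real"
    and lambda0 :: real
  assumes "levy_density nu"
    and "confining_potential V"
    and "assumption_A f g nu V p"
    and "condition_D f g"
    and "ground_state phi0"
    and "schroedinger_kernel u"
    and "heat_kernel_estimate f g lambda0 phi0 u"
  shows "\<forall>t > 0. \<exists>\<kappa> > 0. \<forall>h.
           integrable (mu phi0) h \<and> (AE y in mu phi0. h y \<ge> 0) \<and> (\<integral>y. h y \<partial>mu phi0) = 1 \<longrightarrow>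
             (\<forall>x. Qop lambda0 phi0 u t h x \<le> \<kappa> / (f1 f (norm x))\<^sup>2) \<and>
             (\<forall>v \<ge> \<kappa>. {x. Qop lambda0 phi0 u t h x \<ge> v}
                        \<subseteq> {x. norm x \<ge> inv_into {0<..} (\<lambda>r. (f r)\<^sup>2) (\<kappa> / v)})"
proof (intro allI impI)
  note lev = assms(1)
  have dec: "\<forall>r s. 0 < r \<longrightarrow> r < s \<longrightarrow> f s < f r" and cont: "continuous_on {0<..} f"
    and pos: "\<forall>r>0. f r > 0" and gpos: "\<forall>r\<ge>0. g r > 0"
    using assms(3) unfolding assumption_A_def by auto
  obtain C1 where C1: "C1 \<ge> 1" and nub: "\<forall>x::'a. x \<noteq> 0 \<longrightarrow> f (norm x) / C1 \<le> nu x \<and> nu x \<le> C1 * f (norm x)"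
    using assms(3) unfolding assumption_A_def by (elim conjE exE) fast
  obtain C3 where C3: "C3 > 0" and A1: "\<forall>x::'a. norm x \<ge> 1 \<longrightarrow>
        (\<integral>\<^sup>+ y. ennreal (indicator {y. norm (x - y) > 1 \<and> norm y > 1} y
                         * f (norm (x - y)) * f (norm y)) \<partial>lborel) \<le> ennreal (C3 * f (norm x))"
    using assms(3) unfolding assumption_A_def by (elim conjE exE) fast
  obtain c0 where c0: "c0 > 0" and Q: "\<forall>a b. a > 2 \<longrightarrow> b > 2 \<longrightarrow> f a * f b \<le> c0 * f (a + b - 1)"
    using lemQ[OF dec pos C3 A1] by blast
  obtain c1 where c1: "c1 \<ge> 1" and S: "\<forall>t\<ge>0. f1 f t \<le> c1 * f1 f (t + 1)"
    using lemS[OF dec pos c0 Q] by blast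
  obtain c where c: "c > 0" and P: "\<forall>a b. 0 \<le> a \<longrightarrow> 0 \<le> b \<longrightarrow> f1 f a * f1 f b \<le> c * f1 f (a + b)"
    using lemP[OF dec pos c0 Q c1 S] by blast
  have Jfin: "(\<integral>\<^sup>+ w. ennreal (indicator {w. norm w > 1} w * f (norm (w::'a))) \<partial>lborel) < \<infinity>"
    by (rule levy_J[OF lev C1 nub])
  obtain M where M: "M > 0" and Conv: "\<forall>x y::'a. (\<integral>\<^sup>+ z. ennreal (f1 f (norm (x - z)) * f1 f (norm (z - y))) \<partial>lborel)
            \<le> ennreal (M * f1 f (norm (x - y)))"
    using conv[OF dec pos cont C3 A1 Jfin c1 S] by blast
  obtain r1 where r1: "r1 > 0" "f r1 \<ge> 1" using levy_ex1[OF lev C1 nub] by blast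
  obtain K Kt where K: "K > 0" and HK: "\<forall>T > 0. \<exists>rho > 1. \<exists>C > 0. \<forall>x y t. t \<ge> T \<longrightarrow>
          max 1 (exp (lambda0 * t) * Gamma f g rho (Kt * t) x y) / C \<le> qk lambda0 phi0 u t x y \<and>
          qk lambda0 phi0 u t x y \<le> C * max 1 (exp (lambda0 * t) * Gamma f g rho (K * t) x y)"
    using assms(7) unfolding heat_kernel_estimate_def by blast
  fix t :: real assume t: "t > 0"
  obtain rho C where C: "C > 0" and HKt: "\<forall>x y. qk lambda0 phi0 u t x y \<le> C * max 1 (exp (lambda0 * t) * Gamma f g rho (K * t) x y)"
    using HK[rule_format, OF t] by (metis order_refl)
  define F where "F = f1 f"
  have Fb: "\<And>r. 0 < F r" "\<And>r. F r \<le> 1" using F_basic[OF dec pos] by (auto simp: F_def)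
  define E where "E = exp (lambda0 * t)"
  define B where "B = M * (1 + c)"
  have EB: "E > 0" "B > 0" using M c by (auto simp: E_def B_def)
  define k0 where "k0 = C * (1 + E * B)"
  have "0 < E * B" using EB by simp
  then have "0 < 1 + E * B" by linarith
  then have k0: "k0 > 0" using C by (simp add: k0_def)
  have qb: "qk lambda0 phi0 u t x y \<le> k0 / (F (norm x))\<^sup>2" for x y
  proof -
    have Kt: "K * t > 0" using K t by simp
    have Gb: "Gamma f g rho (K * t) x y \<le> B / (F (norm x))\<^sup>2"
      using gamma_bound[OF dec pos gpos Kt M Conv c P, of rho x y] by (simp add: B_def F_def)
    define s where "s = (F (norm x))\<^sup>2"
    have s: "0 < s" "s \<le> 1" using Fb[of "norm x"] by (auto simp: s_def power_le_one)
    have "max 1 (E * Gamma f g rho (K * t) x y) \<le> (1 + E * B) / s"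
    proof (rule max.boundedI)
      have "0 < E * B" using EB by simp
      then have "s \<le> 1 + E * B" using s by linarith
      then show "1 \<le> (1 + E * B) / s" using s by simp
      have "E * Gamma f g rho (K * t) x y \<le> E * (B / s)" using mult_left_mono[OF Gb, of E] EB by (simp add: s_def)
      also have "\<dots> \<le> (1 + E * B) / s" using s by (simp add: field_simps)
      finally show "E * Gamma f g rho (K * t) x y \<le> (1 + E * B) / s" .
    qed
    then have "C * max 1 (E * Gamma f g rho (K * t) x y) \<le> C * ((1 + E * B) / s)"
      using C by (intro mult_left_mono) auto
    then show ?thesis using HKt[rule_format, of x y] by (simp add: E_def k0_def s_def)
  qed
  have Qb: "Qop lambda0 phi0 u t h x \<le> k0 / (F (norm x))\<^sup>2"
    if hi: "integrable (mu phi0) h" and hp: "AE y in mu phi0. h y \<ge> 0"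
      and h1: "(\<integral>y. h y \<partial>mu phi0) = 1" for h :: "'a \<Rightarrow> real" and x
  proof -
    define kk where "kk = k0 / (F (norm x))\<^sup>2"
    have kk: "kk > 0" using k0 Fb[of "norm x"] by (simp add: kk_def)
    have "Qop lambda0 phi0 u t h x \<le> (\<integral>y. kk * h y \<partial>mu phi0)"
      unfolding Qop_def
    proof (rule integral_mono_AE')
      show "integrable (mu phi0) (\<lambda>y. kk * h y)" using hi by simp
      show "AE y in mu phi0. qk lambda0 phi0 u t x y * h y \<le> kk * h y"
      proof (rule AE_mp[OF hp], rule AE_I2, rule impI)
        fix y assume "0 \<le> h y"
        then show "qk lambda0 phi0 u t x y * h y \<le> kk * h y"
          using mult_right_mono[OF qb[of x y], of "h y"] unfolding kk_def by simp
      qed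
      show "AE y in mu phi0. 0 \<le> kk * h y" using hp kk by auto
    qed
    also have "\<dots> = kk" using h1 by simp
    finally show ?thesis by (simp add: kk_def)
  qed
  define \<kappa> where "\<kappa> = 2 * k0"
  show "\<exists>\<kappa> > 0. \<forall>h.
           integrable (mu phi0) h \<and> (AE y in mu phi0. h y \<ge> 0) \<and> (\<integral>y. h y \<partial>mu phi0) = 1 \<longrightarrow>
             (\<forall>x. Qop lambda0 phi0 u t h x \<le> \<kappa> / (f1 f (norm x))\<^sup>2) \<and>
             (\<forall>v \<ge> \<kappa>. {x. Qop lambda0 phi0 u t h x \<ge> v}
                        \<subseteq> {x. norm x \<ge> inv_into {0<..} (\<lambda>r. (f r)\<^sup>2) (\<kappa> / v)})"
  proof (intro exI[of _ \<kappa>] conjI allI impI)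
    show "\<kappa> > 0" using k0 by (simp add: \<kappa>_def)
    fix h :: "'a \<Rightarrow> real"
    assume hyp: "integrable (mu phi0) h \<and> (AE y in mu phi0. h y \<ge> 0) \<and> (\<integral>y. h y \<partial>mu phi0) = 1"
    fix x :: 'a
    show "Qop lambda0 phi0 u t h x \<le> \<kappa> / (f1 f (norm x))\<^sup>2"
    proof -
      have "k0 / (F (norm x))\<^sup>2 \<le> \<kappa> / (F (norm x))\<^sup>2"
        using k0 Fb[of "norm x"] by (intro divide_right_mono) (auto simp: \<kappa>_def)
      then show ?thesis using Qb[of h x] hyp by (simp add: F_def)
    qed
  next
    fix h :: "'a \<Rightarrow> real" and v :: real
    assume hyp: "integrable (mu phi0) h \<and> (AE y in mu phi0. h y \<ge> 0) \<and> (\<integral>y. h y \<partial>mu phi0) = 1"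
      and v: "\<kappa> \<le> v"
    show "{x. Qop lambda0 phi0 u t h x \<ge> v} \<subseteq> {x. norm x \<ge> inv_into {0<..} (\<lambda>r. (f r)\<^sup>2) (\<kappa> / v)}"
    proof
      fix x assume "x \<in> {x. Qop lambda0 phi0 u t h x \<ge> v}"
      then have Qv: "Qop lambda0 phi0 u t h x \<ge> v" by simp
      have Qx: "Qop lambda0 phi0 u t h x \<le> k0 / (F (norm x))\<^sup>2" using Qb[of h x] hyp by simp
      define s where "s = (F (norm x))\<^sup>2"
      have s: "0 < s" "s \<le> 1" using Fb[of "norm x"] by (auto simp: s_def power_le_one)
      have vpos: "v > 0" using v k0 by (simp add: \<kappa>_def)
      have "v \<le> k0 / s" using Qv Qx by (simp add: s_def)
      then have vs: "v * s \<le> k0" using s by (simp add: field_simps)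
      have "s \<le> 1/2"
      proof -
        have "2 * k0 * s \<le> v * s" using v s by (simp add: \<kappa>_def mult_right_mono)
        then have "2 * k0 * s \<le> k0" using vs by linarith
        then show ?thesis using k0 by (simp add: field_simps)
      qed
      then have Flt: "F (norm x) < 1"
      proof (rule contrapos_pp)
        assume "\<not> F (norm x) < 1"
        then have "F (norm x) = 1" using Fb[of "norm x"] by linarith
        then show "\<not> s \<le> 1/2" by (simp add: s_def)
      qed
      then have nx: "norm x > 0" by (auto simp: F_def f1_def)
      have fx: "f (norm x) < 1" "F (norm x) = f (norm x)" using Flt nx by (auto simp: F_def f1_def)
      define w where "w = \<kappa> / v"
      have w: "0 < w" "w \<le> 1" using vpos v k0 by (auto simp: w_def \<kappa>_def)
      have "s \<le> k0 / v" using vs vpos by (simp add: field_simps)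
      also have "\<dots> < w" using k0 vpos by (simp add: w_def \<kappa>_def divide_strict_right_mono)
      finally have sw: "(f (norm x))\<^sup>2 < w" using fx by (simp add: s_def)
      have r1x: "r1 \<le> norm x"
      proof (rule ccontr)
        assume "\<not> r1 \<le> norm x"
        then have "f r1 < f (norm x)" using dec nx by auto
        then show False using r1 fx by linarith
      qed
      have "1 \<le> (f r1)\<^sup>2" using r1 by (simp add: one_le_power)
      then have wr1: "w \<le> (f r1)\<^sup>2" using w by linarith
      have contf: "continuous_on {r1..norm x} (\<lambda>r. (f r)\<^sup>2)"
        by (intro continuous_intros continuous_on_subset[OF cont]) (use r1 in auto)
      obtain r where r: "r1 \<le> r" "r \<le> norm x" "(f r)\<^sup>2 = w"
        using IVT2'[of "\<lambda>r. (f r)\<^sup>2" "norm x" w r1, OF _ wr1 r1x contf] sw by auto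
      have wim: "w \<in> (\<lambda>r. (f r)\<^sup>2) ` {0<..}" using r r1 by force
      define r' where "r' = inv_into {0<..} (\<lambda>r. (f r)\<^sup>2) w"
      have r': "r' > 0" "(f r')\<^sup>2 = w"
        using inv_into_into[OF wim] f_inv_into_f[OF wim] by (auto simp: r'_def)
      have "r' \<le> norm x"
      proof (rule ccontr)
        assume "\<not> r' \<le> norm x"
        then have "f r' < f (norm x)" using dec nx by auto
        moreover have "0 < f r'" using pos r' by auto
        ultimately have "(f r')\<^sup>2 < (f (norm x))\<^sup>2" by (simp add: power_strict_mono)
        then show False using r' sw by linarith
      qed
      then show "x \<in> {x. norm x \<ge> inv_into {0<..} (\<lambda>r. (f r)\<^sup>2) (\<kappa> / v)}"
        by (simp add: r'_def w_def)
    qed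
  qed
qed


end
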